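(* Let $N\ge 1$, let $a_1,\dots,a_N>0$, $T_1,\dots,T_N\ge 0$ and $P_{\mathrm{tot}}>0$, let $c=\ln 2$, $\bar P_i=(2^{T_i}-1)/a_i$, and let $W_0$ be the principal branch of the Lambert W function. For $\lambda>0$ define $$P_i(\lambda)=\frac{2}{\lambda c^2}\,W_0\!\left(\frac{\lambda c^2}{2a_i}\,2^{T_i}\right)-\frac1{a_i},\qquad P_i^*(\lambda)=\min\{\bar P_i,\max\{0,P_i(\lambda)\}\},\qquad S(\lambda)=\sum_{i=1}^N P_i^*(\lambda).$$ Suppose $P_{\mathrm{tot}}<\sum_{i=1}^N\bar P_i$. Then there exists $\lambda^*>0$ with $S(\lambda^* )=P_{\mathrm{tot}}$, and for any such $\lambda^*$ the vector $(P_1^*(\lambda^* ),\dots,P_N^*(\lambda^* ))$ is an optimal solution of the problem of minimizing $\sum_{i=1}^N(\log_2(1+a_iP_i)-T_i)^2$ subject to $\sum_i P_i\le P_{\mathrm{tot}}$ and $P_i\ge 0$ for all $i$. Moreover, $P_i^*(\lambda)=0$ whenever $\lambda\ge 2a_iT_i/c$.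
   Context: For $z\ge 0$, $W_0(z)$ is the unique $w\ge 0$ with $we^w=z$. *)

theory Defs
  imports Complex_Main
begin

text \<open>Principal branch of Lambert W on [0, inf): the unique w >= 0 with w e^w = z.\<close>
definition lambertW0 :: "real \<Rightarrow> real" where
  "lambertW0 z = (THE w. w \<ge> 0 \<and> w * exp w = z)"

definition Pbar :: "real \<Rightarrow> real \<Rightarrow> real" where
  "Pbar a T = (2 powr T - 1) / a"

definition Plam :: "real \<Rightarrow> real \<Rightarrow> real \<Rightarrow> real" where
  "Plam a T lam = 2 / (lam * (ln 2)\<^sup>2) * lambertW0 (lam * (ln 2)\<^sup>2 / (2 * a) * 2 powr T) - 1 / a"

definition Pstar :: "real \<Rightarrow> real \<Rightarrow> real \<Rightarrow> real" where
  "Pstar a T lam = min (Pbar a T) (max 0 (Plam a T lam))"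

definition objective :: "nat \<Rightarrow> (nat \<Rightarrow> real) \<Rightarrow> (nat \<Rightarrow> real) \<Rightarrow> (nat \<Rightarrow> real) \<Rightarrow> real" where
  "objective N a T P = (\<Sum>i=1..N. (log 2 (1 + a i * P i) - T i)\<^sup>2)"

definition feasible :: "nat \<Rightarrow> real \<Rightarrow> (nat \<Rightarrow> real) \<Rightarrow> bool" where
  "feasible N Ptot P \<longleftrightarrow> (\<Sum>i=1..N. P i) \<le> Ptot \<and> (\<forall>i\<in>{1..N}. P i \<ge> 0)"

definition optimal :: "nat \<Rightarrow> (nat \<Rightarrow> real) \<Rightarrow> (nat \<Rightarrow> real) \<Rightarrow> real \<Rightarrow> (nat \<Rightarrow> real) \<Rightarrow> bool" where
  "optimal N a T Ptot P \<longleftrightarrow> feasible N Ptot P \<and>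
     (\<forall>Q. feasible N Ptot Q \<longrightarrow> objective N a T P \<le> objective N a T Q)"

end

theory Submission
  imports Defs
begin


lemma we_strict: "0 \<le> x \<Longrightarrow> x < y \<Longrightarrow> x * exp x < y * exp (y::real)"
proof -
  assume h: "0 \<le> x" "x < y"
  have "x * exp x \<le> x * exp y" using h by (intro mult_left_mono) auto
  also have "\<dots> < y * exp y" using h by (intro mult_strict_right_mono) auto
  finally show ?thesis .
qed

lemma we_le_iff: "0 \<le> x \<Longrightarrow> 0 \<le> y \<Longrightarrow> x * exp x \<le> y * exp y \<longleftrightarrow> x \<le> (y::real)"
  using we_strict[of x y] we_strict[of y x] by (cases "x = y") (auto simp: not_le[symmetric])

lemma W_ex: "0 \<le> (z::real) \<Longrightarrow> \<exists>w. w \<ge> 0 \<and> w * exp w = z"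
proof -
  assume z: "0 \<le> z"
  have "z \<le> z * exp z" using z by (simp add: mult_le_cancel_left1)
  then have "\<exists>w. 0 \<le> w \<and> w \<le> z \<and> w * exp w = z"
    using z by (intro IVT') (auto intro!: continuous_intros)
  then show ?thesis by blast
qed

lemma W_prop: assumes "0 \<le> z" shows "lambertW0 z \<ge> 0 \<and> lambertW0 z * exp (lambertW0 z) = z"
proof -
  have "\<exists>!w. w \<ge> 0 \<and> w * exp w = z"
    using W_ex[OF assms] by (metis order_antisym we_le_iff order_refl)
  then show ?thesis unfolding lambertW0_def by (rule theI')
qed

lemma W_unique: "0 \<le> w \<Longrightarrow> w * exp w = z \<Longrightarrow> lambertW0 z = w"
  using W_prop[of z] by (metis mult_nonneg_nonneg exp_ge_zero order_antisym order_refl we_le_iff)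

lemma W_cont: assumes "0 \<le> Z" shows "continuous_on {0..Z} lambertW0"
proof -
  let ?f = "\<lambda>w::real. w * exp w"
  have c: "continuous_on ({0..Z} :: real set) ?f" by (auto intro!: continuous_intros)
  have "continuous_on (?f ` {0..Z}) lambertW0"
    by (rule continuous_on_inv[OF c]) (auto intro: W_unique)
  moreover have "{0..Z} \<subseteq> ?f ` {0..Z}"
  proof
    fix z assume z: "z \<in> {0..Z}"
    have "Z \<le> Z * exp Z" using assms by (simp add: mult_le_cancel_left1)
    then have "\<exists>w. 0 \<le> w \<and> w \<le> Z \<and> ?f w = z"
      using z by (intro IVT') (auto intro!: continuous_intros)
    then show "z \<in> ?f ` {0..Z}" by force
  qed
  ultimately show ?thesis by (rule continuous_on_subset)
qed



lemma Plam_formula: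
  fixes a T lam :: real
  assumes a: "a > 0" and l: "lam > 0"
  defines "w \<equiv> lambertW0 (lam * (ln 2)\<^sup>2 / (2 * a) * 2 powr T)"
  shows "w \<ge> 0" "Plam a T lam = (exp (ln 2 * (- w / ln 2 + T)) - 1) / a"
    "w * exp w = lam * (ln 2)\<^sup>2 / (2 * a) * exp (ln 2 * T)"
proof -
  let ?c = "ln (2::real)"
  have c: "?c > 0" by simp
  have p: "(2::real) powr T = exp (?c * T)" by (simp add: powr_def mult.commute)
  have z: "lam * ?c\<^sup>2 / (2 * a) * 2 powr T \<ge> 0" using a l by simp
  from W_prop[OF z] show w0: "w \<ge> 0" and we: "w * exp w = lam * ?c\<^sup>2 / (2 * a) * exp (?c * T)"
    unfolding w_def p by auto
  have "w = lam * ?c\<^sup>2 / (2 * a) * exp (?c * T) * exp (-w)"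
  proof -
    have "w = w * exp w * exp (-w)" by (simp add: exp_minus)
    then show ?thesis using we by simp
  qed
  then have "2 / (lam * ?c\<^sup>2) * w = exp (?c * T) * exp (-w) / a"
    using a l c by (simp add: field_simps)
  also have "\<dots> = exp (?c * (- w / ?c + T)) / a"
    using c by (simp add: exp_add[symmetric] algebra_simps)
  finally show "Plam a T lam = (exp (?c * (- w / ?c + T)) - 1) / a"
    unfolding Plam_def w_def[symmetric] by (simp add: diff_divide_distrib)
qed

lemma Pstar_formula:
  fixes a T lam :: real
  assumes a: "a > 0" and l: "lam > 0" and T: "T \<ge> 0"
  defines "w \<equiv> lambertW0 (lam * (ln 2)\<^sup>2 / (2 * a) * 2 powr T)"
  shows "Pstar a T lam = (exp (ln 2 * (max (-T) (- w / ln 2) + T)) - 1) / a"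
proof -
  let ?c = "ln (2::real)"
  define v where "v y = (exp (?c * (y + T)) - 1) / a" for y
  have mono: "v x \<le> v y \<longleftrightarrow> x \<le> y" for x y unfolding v_def using a
    by (simp add: divide_le_cancel)
  have maxv: "max (v x) (v y) = v (max x y)" for x y using mono by (auto simp: max_def)
  have minv: "min (v x) (v y) = v (min x y)" for x y using mono by (auto simp: min_def)
  have "Pbar a T = v 0" unfolding Pbar_def v_def by (simp add: powr_def mult.commute)
  moreover have "0 = v (-T)" unfolding v_def by simp
  moreover have "Plam a T lam = v (- w / ?c)" unfolding v_def w_def using Plam_formula[OF a l] by simp
  moreover have "w \<ge> 0" unfolding w_def using Plam_formula[OF a l] by simp
  ultimately have "Pstar a T lam = v (min 0 (max (-T) (- w / ?c)))"
    unfolding Pstar_def by (metis maxv minv)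
  also have "min 0 (max (-T) (- w / ?c)) = max (-T) (- w / ?c)"
    using T \<open>w \<ge> 0\<close> by (auto simp: divide_nonneg_pos)
  finally show ?thesis unfolding v_def .
qed



lemma key:
  fixes a T lam q :: real
  assumes a: "a > 0" and l: "lam > 0" and T: "T \<ge> 0" and q: "q \<ge> 0"
  shows "(log 2 (1 + a * Pstar a T lam) - T)\<^sup>2 + lam * Pstar a T lam
     \<le> (log 2 (1 + a * q) - T)\<^sup>2 + lam * min q (Pbar a T)"
proof -
  let ?c = "ln (2::real)"
  have c: "?c > 0" by simp
  define w where "w = lambertW0 (lam * (ln 2)\<^sup>2 / (2 * a) * 2 powr T)"
  have w0: "w \<ge> 0" and we: "w * exp w = lam * ?c\<^sup>2 / (2 * a) * exp (?c * T)"
    using Plam_formula[OF a l, of T] unfolding w_def by auto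
  define y0 where "y0 = - w / ?c"
  define ys where "ys = max (-T) y0"
  define K where "K = lam * exp (?c * T) / a"
  have K: "K > 0" unfolding K_def using a l by simp
  define h where "h y = y\<^sup>2 + K * exp (?c * y)" for y
  have d0: "2 * y0 + K * ?c * exp (?c * y0) = 0"
  proof -
    have "w = w * exp w * exp (-w)" by (simp add: exp_minus)
    also have "\<dots> = lam * ?c\<^sup>2 / (2 * a) * exp (?c * T) * exp (-w)" using we by simp
    finally have wf: "w = lam * ?c\<^sup>2 / (2 * a) * exp (?c * T) * exp (-w)" .
    have cy: "?c * y0 = - w" unfolding y0_def using c by simp
    have "K * ?c * exp (?c * y0) = K * ?c * exp (-w)" unfolding cy ..
    also have "\<dots> = 2 / ?c * (lam * ?c\<^sup>2 / (2 * a) * exp (?c * T) * exp (-w))"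
      unfolding K_def using c a by (simp add: power2_eq_square)
    also have "\<dots> = 2 / ?c * w" using wf by simp
    finally have "K * ?c * exp (?c * y0) = 2 / ?c * w" .
    then show ?thesis unfolding y0_def by simp
  qed
  have dge: "2 * ys + K * ?c * exp (?c * ys) \<ge> 0"
  proof -
    have "y0 \<le> ys" unfolding ys_def by simp
    then have "exp (?c * y0) \<le> exp (?c * ys)" using c by simp
    then have "K * ?c * exp (?c * y0) \<le> K * ?c * exp (?c * ys)" using K c by simp
    then show ?thesis using d0 \<open>y0 \<le> ys\<close> by linarith
  qed
  have H1: "h ys \<le> h y" if y: "-T \<le> y" for y
  proof -
    have p: "(y - ys) * (2 * ys + K * ?c * exp (?c * ys)) \<ge> 0"
    proof (cases "ys = y0")
      case True then show ?thesis using d0 by simp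
    next
      case False then have "ys = -T" unfolding ys_def by (auto simp: max_def)
      then show ?thesis using y dge by simp
    qed
    have s: "y\<^sup>2 \<ge> ys\<^sup>2 + 2 * ys * (y - ys)"
      using zero_le_power2[of "y - ys"] by (simp add: power2_eq_square algebra_simps)
    have "exp (?c * y) = exp (?c * ys) * exp (?c * (y - ys))"
      by (simp add: exp_add[symmetric] algebra_simps)
    also have "\<dots> \<ge> exp (?c * ys) * (1 + ?c * (y - ys))"
      by (intro mult_left_mono) (auto simp: exp_ge_add_one_self)
    finally have e0: "exp (?c * y) \<ge> exp (?c * ys) * (1 + ?c * (y - ys))" .
    have e: "K * exp (?c * y) \<ge> K * exp (?c * ys) + K * ?c * exp (?c * ys) * (y - ys)"
      using K mult_left_mono[OF e0, of K] by (simp add: algebra_simps)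
    show ?thesis unfolding h_def using p s e by (simp add: algebra_simps)
  qed
  have H2: "(log 2 (1 + a * p) - T)\<^sup>2 + lam * p = h (log 2 (1 + a * p) - T) - lam / a"
    and H2': "-T \<le> log 2 (1 + a * p) - T" if p: "0 \<le> p" for p
  proof -
    define y where "y = log 2 (1 + a * p) - T"
    have pos: "1 + a * p > 0" using a p by (simp add: add_pos_nonneg)
    have "?c * (y + T) = ln (1 + a * p)" unfolding y_def log_def using c by simp
    then have "exp (?c * (y + T)) = 1 + a * p" using pos by simp
    then have e1: "exp (?c * y) * exp (?c * T) = 1 + a * p"
      by (simp add: exp_add[symmetric] distrib_left)
    have "K * exp (?c * y) = lam * (exp (?c * y) * exp (?c * T)) / a" unfolding K_def by simp
    also have "\<dots> = lam / a + lam * p" unfolding e1 using a by (simp add: field_simps)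
    finally have "lam * p = K * exp (?c * y) - lam / a" by simp
    then show "(log 2 (1 + a * p) - T)\<^sup>2 + lam * p = h (log 2 (1 + a * p) - T) - lam / a"
      unfolding h_def y_def[symmetric] by simp
    have "1 \<le> 1 + a * p" using a p by simp
    then have "ln (1 + a * p) \<ge> 0" by (rule ln_ge_zero)
    then have "log 2 (1 + a * p) \<ge> 0" unfolding log_def by simp
    then show "-T \<le> log 2 (1 + a * p) - T" by simp
  qed
  have Pbar_log: "log 2 (1 + a * Pbar a T) = T"
    unfolding Pbar_def using a by simp
  have "(1::real) \<le> 2 powr T" using T by (simp add: ge_one_powr_ge_zero)
  then have Pbar0: "Pbar a T \<ge> 0" unfolding Pbar_def using a by simp
  have Ps0: "Pstar a T lam \<ge> 0" unfolding Pstar_def using Pbar0 by simp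
  have Ps: "log 2 (1 + a * Pstar a T lam) - T = ys"
  proof -
    have "1 + a * Pstar a T lam = exp (?c * (ys + T))"
      using Pstar_formula[OF a l T] a unfolding ys_def y0_def w_def by simp
    then show ?thesis unfolding log_def using c by simp
  qed
  define q' where "q' = min q (Pbar a T)"
  have q'0: "q' \<ge> 0" unfolding q'_def using q Pbar0 by simp
  have sq: "(log 2 (1 + a * q') - T)\<^sup>2 \<le> (log 2 (1 + a * q) - T)\<^sup>2"
  proof (cases "q \<le> Pbar a T")
    case True then show ?thesis unfolding q'_def by simp
  next
    case False then show ?thesis unfolding q'_def using Pbar_log by simp
  qed
  have "(log 2 (1 + a * Pstar a T lam) - T)\<^sup>2 + lam * Pstar a T lam = h ys - lam / a"
    using H2[OF Ps0] Ps by simp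
  also have "\<dots> \<le> h (log 2 (1 + a * q') - T) - lam / a"
    using H1[OF H2'[OF q'0]] by simp
  also have "\<dots> = (log 2 (1 + a * q') - T)\<^sup>2 + lam * q'" using H2[OF q'0] by simp
  also have "\<dots> \<le> (log 2 (1 + a * q) - T)\<^sup>2 + lam * min q (Pbar a T)"
    using sq unfolding q'_def by simp
  finally show ?thesis .
qed



lemma Pbar_nonneg: "a > 0 \<Longrightarrow> T \<ge> 0 \<Longrightarrow> Pbar a T \<ge> 0"
proof -
  assume "a > 0" "T \<ge> 0"
  have "(1::real) \<le> 2 powr T" using \<open>T \<ge> 0\<close> by (simp add: ge_one_powr_ge_zero)
  then show ?thesis unfolding Pbar_def using \<open>a > 0\<close> by simp
qed

lemma Pstar_nonneg: "a > 0 \<Longrightarrow> T \<ge> 0 \<Longrightarrow> Pstar a T lam \<ge> 0"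
  using Pbar_nonneg unfolding Pstar_def by simp

lemma Pstar_zero:
  fixes a T lam :: real
  assumes a: "a > 0" and l: "lam > 0" and T: "T \<ge> 0" and big: "lam \<ge> 2 * a * T / ln 2"
  shows "Pstar a T lam = 0"
proof -
  let ?c = "ln (2::real)"
  have c: "?c > 0" by simp
  define w where "w = lambertW0 (lam * (ln 2)\<^sup>2 / (2 * a) * 2 powr T)"
  have w0: "w \<ge> 0" and we: "w * exp w = lam * ?c\<^sup>2 / (2 * a) * exp (?c * T)"
    using Plam_formula[OF a l, of T] unfolding w_def by auto
  have "?c * T \<le> lam * ?c\<^sup>2 / (2 * a)"
  proof -
    have "2 * a * T \<le> lam * ?c" using big c by (simp add: divide_le_eq)
    then have "?c * (2 * a * T) \<le> ?c * (lam * ?c)" using c by simp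
    then show ?thesis using a by (simp add: le_divide_eq power2_eq_square algebra_simps)
  qed
  then have "(?c * T) * exp (?c * T) \<le> w * exp w" unfolding we
    by (intro mult_right_mono) auto
  then have "?c * T \<le> w" using we_le_iff[of "?c * T" w] w0 T c by simp
  then have "T \<le> w / ?c" using c by (simp add: le_divide_eq mult.commute)
  then have "max (-T) (- w / ?c) = -T" by (simp add: max_def)
  then show ?thesis using Pstar_formula[OF a l T] unfolding w_def by simp
qed

lemma Pstar_lower:
  fixes a T lam :: real
  assumes a: "a > 0" and l: "lam > 0" and T: "T \<ge> 0"
  shows "Pstar a T lam \<ge> (exp (ln 2 * T - lam * ((ln 2)\<^sup>2 / (2 * a) * 2 powr T)) - 1) / a"
proof -
  let ?c = "ln (2::real)"
  define z where "z = lam * ((ln 2)\<^sup>2 / (2 * a) * 2 powr T)"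
  define w where "w = lambertW0 (lam * (ln 2)\<^sup>2 / (2 * a) * 2 powr T)"
  have w0: "w \<ge> 0" and we: "w * exp w = lam * ?c\<^sup>2 / (2 * a) * exp (?c * T)"
    and Pl: "Plam a T lam = (exp (ln 2 * (- w / ln 2 + T)) - 1) / a"
    using Plam_formula[OF a l, of T] unfolding w_def by auto
  have "z = w * exp w" unfolding we z_def by (simp add: powr_def mult.commute)
  also have "\<dots> \<ge> w" using w0 by (simp add: mult_le_cancel_left1)
  finally have wz: "w \<le> z" .
  have z0: "z \<ge> 0" using w0 wz by simp
  have Pl': "Plam a T lam = (exp (?c * T - w) - 1) / a" unfolding Pl by (simp add: algebra_simps)
  have L1: "(exp (?c * T - z) - 1) / a \<le> Plam a T lam" unfolding Pl'
    using a wz by (simp add: divide_right_mono)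
  have L2: "(exp (?c * T - z) - 1) / a \<le> Pbar a T" unfolding Pbar_def
    using a z0 by (simp add: divide_right_mono powr_def mult.commute)
  show ?thesis unfolding Pstar_def z_def[symmetric] using L1 L2 by simp
qed

lemma Pstar_cont:
  fixes a T l0 l1 :: real
  assumes a: "a > 0" and l0: "l0 > 0"
  shows "continuous_on {l0..l1} (\<lambda>lam. Pstar a T lam)"
proof -
  define Z where "Z = max 0 (l1 * (ln 2)\<^sup>2 / (2 * a) * 2 powr T)"
  have "continuous_on {l0..l1} (\<lambda>lam. lambertW0 (lam * (ln 2)\<^sup>2 / (2 * a) * 2 powr T))"
  proof (rule continuous_on_compose2[OF W_cont[of Z]])
    show "0 \<le> Z" unfolding Z_def by simp
    show "continuous_on {l0..l1} (\<lambda>lam. lam * (ln 2)\<^sup>2 / (2 * a) * 2 powr T)"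
      using a by (intro continuous_intros) auto
    show "(\<lambda>lam. lam * (ln 2)\<^sup>2 / (2 * a) * 2 powr T) ` {l0..l1} \<subseteq> {0..Z}"
    proof
      fix x assume "x \<in> (\<lambda>lam. lam * (ln 2)\<^sup>2 / (2 * a) * 2 powr T) ` {l0..l1}"
      then obtain lam where lam: "lam \<in> {l0..l1}" and x: "x = lam * (ln 2)\<^sup>2 / (2 * a) * 2 powr T"
        by auto
      have "x \<ge> 0" unfolding x using lam l0 a by simp
      moreover have "x \<le> l1 * (ln 2)\<^sup>2 / (2 * a) * 2 powr T" unfolding x using lam a
        by (intro mult_right_mono divide_right_mono) auto
      ultimately show "x \<in> {0..Z}" unfolding Z_def by simp
    qed
  qed
  then show ?thesis unfolding Pstar_def Plam_def using l0
    by (auto intro!: continuous_intros)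
qed



theorem mainTheorem8:
  fixes N :: nat and a T :: "nat \<Rightarrow> real" and Ptot :: real
  assumes "N \<ge> 1"
    and "\<forall>i\<in>{1..N}. a i > 0"
    and "\<forall>i\<in>{1..N}. T i \<ge> 0"
    and "Ptot > 0"
    and "Ptot < (\<Sum>i=1..N. Pbar (a i) (T i))"
  shows "(\<exists>lam>0. (\<Sum>i=1..N. Pstar (a i) (T i) lam) = Ptot)
    \<and> (\<forall>lam>0. (\<Sum>i=1..N. Pstar (a i) (T i) lam) = Ptot \<longrightarrow>
          optimal N a T Ptot (\<lambda>i. Pstar (a i) (T i) lam))
    \<and> (\<forall>i\<in>{1..N}. \<forall>lam>0. lam \<ge> 2 * a i * T i / ln 2 \<longrightarrow> Pstar (a i) (T i) lam = 0)"
proof (intro conjI)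
  note A = assms(2) and TT = assms(3)
  show Z: "\<forall>i\<in>{1..N}. \<forall>lam>0. lam \<ge> 2 * a i * T i / ln 2 \<longrightarrow> Pstar (a i) (T i) lam = 0"
    using Pstar_zero A TT by simp
  let ?S = "\<lambda>lam. \<Sum>i=1..N. Pstar (a i) (T i) lam"
  show "\<forall>lam>0. ?S lam = Ptot \<longrightarrow> optimal N a T Ptot (\<lambda>i. Pstar (a i) (T i) lam)"
  proof (intro allI impI)
    fix lam :: real assume l: "lam > 0" and S: "?S lam = Ptot"
    have feas: "feasible N Ptot (\<lambda>i. Pstar (a i) (T i) lam)"
      unfolding feasible_def using S Pstar_nonneg A TT by auto
    have "objective N a T (\<lambda>i. Pstar (a i) (T i) lam) \<le> objective N a T Q" if Q: "feasible N Ptot Q" for Q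
    proof -
      have Q0: "\<forall>i\<in>{1..N}. Q i \<ge> 0" and Qs: "(\<Sum>i=1..N. Q i) \<le> Ptot" using Q unfolding feasible_def by auto
      let ?f = "\<lambda>P i. (log 2 (1 + a i * P i) - T i)\<^sup>2"
      have "(\<Sum>i=1..N. ?f (\<lambda>i. Pstar (a i) (T i) lam) i + lam * Pstar (a i) (T i) lam)
          \<le> (\<Sum>i=1..N. ?f Q i + lam * min (Q i) (Pbar (a i) (T i)))"
      proof (rule sum_mono)
        fix i assume i: "i \<in> {1..N}"
        show "?f (\<lambda>i. Pstar (a i) (T i) lam) i + lam * Pstar (a i) (T i) lam
          \<le> ?f Q i + lam * min (Q i) (Pbar (a i) (T i))"
          using key[of "a i" lam "T i" "Q i"] A TT Q0 l i by simp
      qed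
      also have "\<dots> \<le> (\<Sum>i=1..N. ?f Q i + lam * Q i)"
        by (rule sum_mono) (use l in \<open>auto intro!: mult_left_mono\<close>)
      finally have "objective N a T (\<lambda>i. Pstar (a i) (T i) lam) + lam * ?S lam
          \<le> objective N a T Q + lam * (\<Sum>i=1..N. Q i)"
        unfolding objective_def by (simp add: sum.distrib sum_distrib_left)
      moreover have "lam * (\<Sum>i=1..N. Q i) \<le> lam * Ptot" using Qs l by simp
      ultimately show ?thesis using S by simp
    qed
    then show "optimal N a T Ptot (\<lambda>i. Pstar (a i) (T i) lam)"
      unfolding optimal_def using feas by blast
  qed
  show "\<exists>lam>0. ?S lam = Ptot"
  proof -
    define F where "F lam = (\<Sum>i=1..N. (exp (ln 2 * T i - lam * ((ln 2)\<^sup>2 / (2 * a i) * 2 powr T i)) - 1) / a i)" for lam :: real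
    have F0: "F 0 = (\<Sum>i=1..N. Pbar (a i) (T i))"
      unfolding F_def Pbar_def by (intro sum.cong) (auto simp: powr_def mult.commute)
    have an: "\<forall>i\<in>{1..N}. a i \<noteq> 0" using A by force
    have "isCont F 0" unfolding F_def by (intro continuous_intros) (use an in blast)
    then have tl: "(F \<longlongrightarrow> F 0) (at_right 0)"
      unfolding isCont_def using filterlim_at_split by blast
    have ev: "eventually (\<lambda>lam. Ptot < F lam) (at_right 0)"
      using order_tendstoD(1)[OF tl] assms(5) F0 by simp
    have "\<exists>lam. 0 < lam \<and> Ptot < F lam"
      by (rule eventually_happens'[OF _ eventually_conj[OF eventually_at_right_less ev]]) simp
    then obtain l0 where l0: "l0 > 0" and Fl0: "Ptot < F l0" by blast
    have Sl0: "F l0 \<le> ?S l0" unfolding F_def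
    proof (rule sum_mono)
      fix i assume i: "i \<in> {1..N}"
      show "(exp (ln 2 * T i - l0 * ((ln 2)\<^sup>2 / (2 * a i) * 2 powr T i)) - 1) / a i \<le> Pstar (a i) (T i) l0"
        using Pstar_lower[of "a i" l0 "T i"] A TT l0 i by blast
    qed
    define l1 where "l1 = l0 + (\<Sum>i=1..N. 2 * a i * T i / ln 2)"
    have nn: "2 * a i * T i / ln 2 \<ge> 0" if i: "i \<in> {1..N}" for i
    proof -
      have "a i > 0" "T i \<ge> 0" using A TT i by auto
      then show ?thesis by simp
    qed
    have "(\<Sum>i=1..N. 2 * a i * T i / ln 2) \<ge> 0"
      using nn by (intro sum_nonneg) blast
    then have l01: "l0 \<le> l1" unfolding l1_def by simp
    have "?S l1 = 0"
    proof (intro sum.neutral ballI)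
      fix i assume i: "i \<in> {1..N}"
      have "2 * a i * T i / ln 2 \<le> (\<Sum>i=1..N. 2 * a i * T i / ln 2)"
        using nn i by (intro member_le_sum) auto
      then have "2 * a i * T i / ln 2 \<le> l1" unfolding l1_def using l0 by simp
      then show "Pstar (a i) (T i) l1 = 0" using Pstar_zero[of "a i" l1 "T i"] A TT i l0 l01 by simp
    qed
    moreover have "continuous_on {l0..l1} ?S"
    proof (intro continuous_on_sum)
      fix i assume i: "i \<in> {1..N}"
      show "continuous_on {l0..l1} (Pstar (a i) (T i))"
        using Pstar_cont[of "a i" l0 l1 "T i"] A l0 i by blast
    qed
    ultimately have "\<exists>x. l0 \<le> x \<and> x \<le> l1 \<and> ?S x = Ptot"
      using Fl0 Sl0 assms(4) l01 by (intro IVT2') simp_all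
    then obtain x where "l0 \<le> x" "?S x = Ptot" by blast
    then show ?thesis using l0 by (intro exI[of _ x]) simp
  qed
qed

end
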